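(* Let $\mathcal C$ be a full subcategory of grading-restricted generalized $V$-modules for a vertex operator algebra $V$ such that $0\in\mathcal C$, $\mathcal C$ is closed under submodules, quotients and finite direct sums, and every module in $\mathcal C$ is finitely generated. For a weak $V$-module $X$, let $I_X$ be the set of submodules of $X$ that are objects of $\mathcal C$, directed by inclusion, let $\alpha_X:I_X\to\mathcal C$ be the direct system $W\mapsto W$ with inclusions as transition maps, and let $Q_X:\varinjlim\alpha_X\to X$ be the unique $V$-homomorphism with $Q_X\circ\phi_W=i_W$ for all $W\in I_X$, where $i_W:W\to X$ is the inclusion and $\phi_W:W\to\varinjlim\alpha_X$ are the canonical maps of the direct limit in the category of weak $V$-modules. Then $Q_X$ is injective for every weak module $X$, and $Q_X$ is surjective if and only if $X$ is an object of $\mathrm{Ind}(\mathcal C)$.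
   Context: $\mathrm{Ind}(\mathcal C)$ (the direct limit completion) is the full subcategory of weak $V$-modules isomorphic to direct limits, in the category of weak $V$-modules, of direct systems $\alpha:I\to\mathcal C$ indexed by directed sets. *)

theory Defs
  imports Complex_Main
begin

class cvec = ab_group_add +
  fixes cscale :: "complex \<Rightarrow> 'a \<Rightarrow> 'a" (infixr "*c" 75)
  assumes cscale_add_right: "a *c (x + y) = a *c x + a *c y"
    and cscale_add_left: "(a + b) *c x = a *c x + b *c x"
    and cscale_assoc: "a *c (b *c x) = (a * b) *c x"
    and cscale_one: "1 *c x = x"

definition csp :: "'a::cvec set \<Rightarrow> 'a set" where
  "csp S = {x. \<exists>F c. finite F \<and> F \<subseteq> S \<and> x = (\<Sum>s\<in>F. c s *c s)}"

definition fin_dim :: "'a::cvec set \<Rightarrow> bool" where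
  "fin_dim S \<longleftrightarrow> (\<exists>F. finite F \<and> F \<subseteq> S \<and> S \<subseteq> csp F)"

definition csubspace :: "'a::cvec set \<Rightarrow> bool" where
  "csubspace M \<longleftrightarrow> 0 \<in> M \<and> (\<forall>x\<in>M. \<forall>y\<in>M. x + y \<in> M) \<and> (\<forall>a. \<forall>x\<in>M. a *c x \<in> M)"

text \<open>Sum of a finitely supported family (all sums below are finite by truncation).\<close>
definition fsum :: "(nat \<Rightarrow> 'a::comm_monoid_add) \<Rightarrow> 'a" where
  "fsum f = sum f {i. f i \<noteq> 0}"

definition sgn_int :: "int \<Rightarrow> complex" where
  "sgn_int l = (if even l then 1 else -1)"

section \<open>Vertex operators (mode convention: Y(u,x) = sum u_n x^(-n-1), u_n = Y u n)\<close>

definition jacobi ::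
  "('v::cvec \<Rightarrow> int \<Rightarrow> 'v \<Rightarrow> 'v) \<Rightarrow> 'm::cvec set \<Rightarrow> ('v \<Rightarrow> int \<Rightarrow> 'm \<Rightarrow> 'm) \<Rightarrow> bool" where
  "jacobi Vop M Y \<longleftrightarrow>
    (\<forall>u v. \<forall>w\<in>M. \<forall>l m n.
      fsum (\<lambda>i. (of_int m gchoose i) *c Y (Vop u (l + int i) v) (m + n - int i) w)
      = fsum (\<lambda>i. ((-1) ^ i * (of_int l gchoose i)) *c
                 (Y u (m + l - int i) (Y v (n + int i) w)
                  - sgn_int l *c Y v (n + l - int i) (Y u (m + int i) w))))"

definition weak_module ::
  "('v::cvec \<Rightarrow> int \<Rightarrow> 'v \<Rightarrow> 'v) \<Rightarrow> 'v \<Rightarrow> 'm::cvec set \<Rightarrow> ('v \<Rightarrow> int \<Rightarrow> 'm \<Rightarrow> 'm) \<Rightarrow> bool" where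
  "weak_module Vop vac M Y \<longleftrightarrow>
     csubspace M
   \<and> (\<forall>u n. \<forall>w\<in>M. Y u n w \<in> M)
   \<and> (\<forall>u n a b. \<forall>w\<in>M. \<forall>w'\<in>M. Y u n (a *c w + b *c w') = a *c Y u n w + b *c Y u n w')
   \<and> (\<forall>u u' n a b. \<forall>w\<in>M. Y (a *c u + b *c u') n w = a *c Y u n w + b *c Y u' n w)
   \<and> (\<forall>u. \<forall>w\<in>M. \<exists>N. \<forall>n\<ge>N. Y u n w = 0)
   \<and> (\<forall>n. \<forall>w\<in>M. Y vac n w = (if n = -1 then w else 0))
   \<and> jacobi Vop M Y"

definition Vgr :: "('v::cvec \<Rightarrow> int \<Rightarrow> 'v \<Rightarrow> 'v) \<Rightarrow> 'v \<Rightarrow> int \<Rightarrow> 'v set" where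
  "Vgr Vop om n = {v. Vop om 1 v = of_int n *c v}"

text \<open>Vertex operator algebra (Lepowsky--Li) on the whole type 'v, vacuum vac, conformal vector om,
  L(n) = om_(n+1).\<close>
definition voa :: "('v::cvec \<Rightarrow> int \<Rightarrow> 'v \<Rightarrow> 'v) \<Rightarrow> 'v \<Rightarrow> 'v \<Rightarrow> bool" where
  "voa Vop vac om \<longleftrightarrow>
     weak_module Vop vac UNIV Vop
   \<and> (\<forall>u. Vop u (-1) vac = u \<and> (\<forall>n\<ge>0. Vop u n vac = 0))
   \<and> (\<exists>c::complex. \<forall>m n v.
        Vop om (m + 1) (Vop om (n + 1) v) - Vop om (n + 1) (Vop om (m + 1) v)
        = of_int (m - n) *c Vop om (m + n + 1) v
          + (if m + n = 0 then of_int (m ^ 3 - m) / 12 * c else 0) *c v)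
   \<and> (\<forall>u n v. Vop (Vop om 0 u) n v = of_int (- n) *c Vop u (n - 1) v)
   \<and> UNIV \<subseteq> csp (\<Union>n. Vgr Vop om n)
   \<and> (\<forall>n. fin_dim (Vgr Vop om n))
   \<and> (\<exists>N. \<forall>n<N. Vgr Vop om n = {0})"

definition gen_eig :: "'m::cvec set \<Rightarrow> ('v \<Rightarrow> int \<Rightarrow> 'm \<Rightarrow> 'm) \<Rightarrow> 'v \<Rightarrow> complex \<Rightarrow> 'm set" where
  "gen_eig M Y om mu = {w\<in>M. \<exists>k. ((\<lambda>x. Y om 1 x - mu *c x) ^^ k) w = 0}"

definition gr_gen_module ::
  "('v::cvec \<Rightarrow> int \<Rightarrow> 'v \<Rightarrow> 'v) \<Rightarrow> 'v \<Rightarrow> 'v \<Rightarrow> 'm::cvec set \<Rightarrow> ('v \<Rightarrow> int \<Rightarrow> 'm \<Rightarrow> 'm) \<Rightarrow> bool" where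
  "gr_gen_module Vop vac om M Y \<longleftrightarrow>
     weak_module Vop vac M Y
   \<and> M \<subseteq> csp (\<Union>mu. gen_eig M Y om mu)
   \<and> (\<forall>mu. fin_dim (gen_eig M Y om mu))
   \<and> (\<forall>mu. \<exists>N::int. \<forall>k<N. gen_eig M Y om (mu + of_int k) = {0})"

definition vhom :: "'m::cvec set \<Rightarrow> ('v \<Rightarrow> int \<Rightarrow> 'm \<Rightarrow> 'm) \<Rightarrow> 'n::cvec set \<Rightarrow> ('v \<Rightarrow> int \<Rightarrow> 'n \<Rightarrow> 'n)
   \<Rightarrow> ('m \<Rightarrow> 'n) \<Rightarrow> bool" where
  "vhom M Y N Y' f \<longleftrightarrow>
     (\<forall>x\<in>M. f x \<in> N)
   \<and> (\<forall>x\<in>M. \<forall>y\<in>M. f (x + y) = f x + f y)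
   \<and> (\<forall>a. \<forall>x\<in>M. f (a *c x) = a *c f x)
   \<and> (\<forall>u n. \<forall>w\<in>M. f (Y u n w) = Y' u n (f w))"

definition viso :: "'m::cvec set \<Rightarrow> ('v \<Rightarrow> int \<Rightarrow> 'm \<Rightarrow> 'm) \<Rightarrow> 'n::cvec set \<Rightarrow> ('v \<Rightarrow> int \<Rightarrow> 'n \<Rightarrow> 'n)
   \<Rightarrow> ('m \<Rightarrow> 'n) \<Rightarrow> bool" where
  "viso M Y N Y' f \<longleftrightarrow> vhom M Y N Y' f \<and> bij_betw f M N"

definition submodule :: "'m::cvec set \<Rightarrow> 'm set \<Rightarrow> ('v \<Rightarrow> int \<Rightarrow> 'm \<Rightarrow> 'm) \<Rightarrow> bool" where
  "submodule N M Y \<longleftrightarrow> N \<subseteq> M \<and> csubspace N \<and> (\<forall>u n. \<forall>w\<in>N. Y u n w \<in> N)"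

definition gen_sub :: "'m::cvec set \<Rightarrow> ('v \<Rightarrow> int \<Rightarrow> 'm \<Rightarrow> 'm) \<Rightarrow> 'm set \<Rightarrow> 'm set" where
  "gen_sub M Y S = \<Inter>{N. submodule N M Y \<and> S \<subseteq> N}"

definition fin_gen :: "'m::cvec set \<Rightarrow> ('v \<Rightarrow> int \<Rightarrow> 'm \<Rightarrow> 'm) \<Rightarrow> bool" where
  "fin_gen M Y \<longleftrightarrow> (\<exists>S. finite S \<and> S \<subseteq> M \<and> gen_sub M Y S = M)"

text \<open>C is represented by a set of modules carried in the type 'c; a module of any type is an
  object of C iff it is isomorphic to a member (C is a full, isomorphism-closed subcategory).\<close>
definition inC :: "('c::cvec set \<times> ('v \<Rightarrow> int \<Rightarrow> 'c \<Rightarrow> 'c)) set \<Rightarrow> 'm::cvec set \<Rightarrow> ('v \<Rightarrow> int \<Rightarrow> 'm \<Rightarrow> 'm) \<Rightarrow> bool" where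
  "inC C M Y \<longleftrightarrow> (\<exists>(A, YA)\<in>C. \<exists>f. viso M Y A YA f)"

definition good_class ::
  "('v::cvec \<Rightarrow> int \<Rightarrow> 'v \<Rightarrow> 'v) \<Rightarrow> 'v \<Rightarrow> 'v \<Rightarrow> ('c::cvec set \<times> ('v \<Rightarrow> int \<Rightarrow> 'c \<Rightarrow> 'c)) set \<Rightarrow> bool" where
  "good_class Vop vac om C \<longleftrightarrow>
     (\<forall>(A, YA)\<in>C. gr_gen_module Vop vac om A YA \<and> fin_gen A YA)
   \<and> (\<exists>(A, YA)\<in>C. A = {0})
   \<and> (\<forall>(A, YA)\<in>C. \<forall>N. submodule N A YA \<longrightarrow> inC C N YA)
   \<and> (\<forall>(A, YA)\<in>C. \<forall>N. submodule N A YA \<longrightarrow>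
        (\<exists>(B, YB)\<in>C. \<exists>f. vhom A YA B YB f \<and> f ` A = B \<and> {x\<in>A. f x = 0} = N))
   \<and> (\<forall>(A, YA)\<in>C. \<forall>(B, YB)\<in>C. \<exists>(D, YD)\<in>C. \<exists>i1 i2.
        vhom A YA D YD i1 \<and> vhom B YB D YD i2
        \<and> (\<forall>d\<in>D. \<exists>!p. p \<in> A \<times> B \<and> d = i1 (fst p) + i2 (snd p)))"

definition dsys ::
  "('v::cvec \<Rightarrow> int \<Rightarrow> 'v \<Rightarrow> 'v) \<Rightarrow> 'v \<Rightarrow> 'i set \<Rightarrow> ('i \<Rightarrow> 'i \<Rightarrow> bool) \<Rightarrow> ('i \<Rightarrow> 'm::cvec set)
   \<Rightarrow> ('i \<Rightarrow> 'v \<Rightarrow> int \<Rightarrow> 'm \<Rightarrow> 'm) \<Rightarrow> ('i \<Rightarrow> 'i \<Rightarrow> 'm \<Rightarrow> 'm) \<Rightarrow> bool" where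
  "dsys Vop vac I le M Y f \<longleftrightarrow>
     (\<forall>i\<in>I. le i i)
   \<and> (\<forall>i\<in>I. \<forall>j\<in>I. \<forall>k\<in>I. le i j \<longrightarrow> le j k \<longrightarrow> le i k)
   \<and> (\<forall>i\<in>I. \<forall>j\<in>I. \<exists>k\<in>I. le i k \<and> le j k)
   \<and> (\<forall>i\<in>I. weak_module Vop vac (M i) (Y i))
   \<and> (\<forall>i\<in>I. \<forall>j\<in>I. le i j \<longrightarrow> vhom (M i) (Y i) (M j) (Y j) (f i j))
   \<and> (\<forall>i\<in>I. \<forall>x\<in>M i. f i i x = x)
   \<and> (\<forall>i\<in>I. \<forall>j\<in>I. \<forall>k\<in>I. le i j \<longrightarrow> le j k \<longrightarrow> (\<forall>x\<in>M i. f j k (f i j x) = f i k x))"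

definition cocone ::
  "'i set \<Rightarrow> ('i \<Rightarrow> 'i \<Rightarrow> bool) \<Rightarrow> ('i \<Rightarrow> 'm::cvec set) \<Rightarrow> ('i \<Rightarrow> 'v \<Rightarrow> int \<Rightarrow> 'm \<Rightarrow> 'm)
   \<Rightarrow> ('i \<Rightarrow> 'i \<Rightarrow> 'm \<Rightarrow> 'm) \<Rightarrow> 'n::cvec set \<Rightarrow> ('v \<Rightarrow> int \<Rightarrow> 'n \<Rightarrow> 'n) \<Rightarrow> ('i \<Rightarrow> 'm \<Rightarrow> 'n) \<Rightarrow> bool" where
  "cocone I le M Y f N YN g \<longleftrightarrow>
     (\<forall>i\<in>I. vhom (M i) (Y i) N YN (g i))
   \<and> (\<forall>i\<in>I. \<forall>j\<in>I. le i j \<longrightarrow> (\<forall>x\<in>M i. g j (f i j x) = g i x))"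

text \<open>(N, g) is a direct limit in the category of weak modules, with the universal property
  tested against all weak modules whose carrier lives in the type 'z.\<close>
definition colim_wrt ::
  "'z::cvec itself \<Rightarrow> ('v::cvec \<Rightarrow> int \<Rightarrow> 'v \<Rightarrow> 'v) \<Rightarrow> 'v \<Rightarrow> 'i set \<Rightarrow> ('i \<Rightarrow> 'i \<Rightarrow> bool)
   \<Rightarrow> ('i \<Rightarrow> 'm::cvec set) \<Rightarrow> ('i \<Rightarrow> 'v \<Rightarrow> int \<Rightarrow> 'm \<Rightarrow> 'm) \<Rightarrow> ('i \<Rightarrow> 'i \<Rightarrow> 'm \<Rightarrow> 'm)
   \<Rightarrow> 'n::cvec set \<Rightarrow> ('v \<Rightarrow> int \<Rightarrow> 'n \<Rightarrow> 'n) \<Rightarrow> ('i \<Rightarrow> 'm \<Rightarrow> 'n) \<Rightarrow> bool" where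
  "colim_wrt T Vop vac I le M Y f N YN g \<longleftrightarrow>
     weak_module Vop vac N YN
   \<and> cocone I le M Y f N YN g
   \<and> (\<forall>(Z::'z set) YZ h. weak_module Vop vac Z YZ \<and> cocone I le M Y f Z YZ h \<longrightarrow>
        (\<exists>u. vhom N YN Z YZ u \<and> (\<forall>i\<in>I. \<forall>x\<in>M i. u (g i x) = h i x)
           \<and> (\<forall>u'. vhom N YN Z YZ u' \<and> (\<forall>i\<in>I. \<forall>x\<in>M i. u' (g i x) = h i x)
                   \<longrightarrow> (\<forall>y\<in>N. u' y = u y))))"

text \<open>X belongs to Ind(C): X (with cocone maps g) is a direct limit of a direct system of objects
  of C indexed by a directed set (index type 'i, carriers in type 'm), universal w.r.t. type 'z.\<close>
definition in_Ind ::
  "'z::cvec itself \<Rightarrow> 'i itself \<Rightarrow> 'm::cvec itself \<Rightarrow> ('v::cvec \<Rightarrow> int \<Rightarrow> 'v \<Rightarrow> 'v) \<Rightarrow> 'v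
   \<Rightarrow> ('c::cvec set \<times> ('v \<Rightarrow> int \<Rightarrow> 'c \<Rightarrow> 'c)) set \<Rightarrow> 'x::cvec set \<Rightarrow> ('v \<Rightarrow> int \<Rightarrow> 'x \<Rightarrow> 'x) \<Rightarrow> bool" where
  "in_Ind T Ti Tm Vop vac C X YX \<longleftrightarrow>
     (\<exists>(I::'i set) le (M::'i \<Rightarrow> 'm set) Y f g.
        dsys Vop vac I le M Y f \<and> (\<forall>i\<in>I. inC C (M i) (Y i))
        \<and> colim_wrt T Vop vac I le M Y f X YX g)"

end

theory Submission
  imports Defs
begin

lemma cscale_zero_left[simp]: "(0::complex) *c (x::'a::cvec) = 0"
proof -
  have "(0+0::complex) *c x = 0 *c x + 0 *c x" by (rule cscale_add_left)
  thus ?thesis by simp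
qed

lemma cscale_zero_right[simp]: "a *c (0::'a::cvec) = 0"
proof -
  have "a *c (0+0::'a) = a *c 0 + a *c 0" by (rule cscale_add_right)
  thus ?thesis by simp
qed

lemma cscale_minus_one: "(-1::complex) *c (x::'a::cvec) = - x"
proof -
  have "x + (-1) *c x = 1 *c x + (-1) *c x" by (simp add: cscale_one)
  also have "\<dots> = (1 + -1) *c x" by (rule cscale_add_left[symmetric])
  finally have "x + (-1) *c x = 0" by simp
  hence "- x = (-1) *c x" by (rule minus_unique)
  thus ?thesis by (rule sym)
qed

lemma csub_zero: "csubspace M \<Longrightarrow> 0 \<in> M" by (simp add: csubspace_def)
lemma csub_add: "csubspace M \<Longrightarrow> x \<in> M \<Longrightarrow> y \<in> M \<Longrightarrow> x + y \<in> M" by (simp add: csubspace_def)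
lemma csub_scale: "csubspace M \<Longrightarrow> x \<in> M \<Longrightarrow> a *c x \<in> M" by (simp add: csubspace_def)
lemma csub_diff: "csubspace M \<Longrightarrow> x \<in> M \<Longrightarrow> y \<in> M \<Longrightarrow> x - y \<in> M"
  using csub_add[of M x "(-1) *c y"] csub_scale[of M y "-1"] by (simp add: cscale_minus_one)

lemma vhom_in: "vhom M Y N Y' h \<Longrightarrow> x \<in> M \<Longrightarrow> h x \<in> N" by (simp add: vhom_def)
lemma vhom_add: "vhom M Y N Y' h \<Longrightarrow> x \<in> M \<Longrightarrow> y \<in> M \<Longrightarrow> h (x + y) = h x + h y" by (simp add: vhom_def)
lemma vhom_scale: "vhom M Y N Y' h \<Longrightarrow> x \<in> M \<Longrightarrow> h (a *c x) = a *c h x" by (simp add: vhom_def)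
lemma vhom_Y: "vhom M Y N Y' h \<Longrightarrow> x \<in> M \<Longrightarrow> h (Y u n x) = Y' u n (h x)" by (simp add: vhom_def)
lemma vhom_zero: "vhom M Y N Y' h \<Longrightarrow> csubspace M \<Longrightarrow> h 0 = 0"
  using vhom_scale[of M Y N Y' h 0 0] csub_zero by fastforce
lemma vhom_diff: "vhom M Y N Y' h \<Longrightarrow> csubspace M \<Longrightarrow> x \<in> M \<Longrightarrow> y \<in> M \<Longrightarrow> h (x - y) = h x - h y"
proof -
  assume a: "vhom M Y N Y' h" "csubspace M" "x \<in> M" "y \<in> M"
  have m: "(-1) *c y \<in> M" using a(2,4) by (rule csub_scale)
  have e0: "h (x + (-1) *c y) = h x + (-1) *c h y"
    using vhom_add[OF a(1,3) m] vhom_scale[OF a(1,4), of "-1"] by simp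
  have e1: "x - y = x + (-1) *c y" "h x - h y = h x + (-1) *c h y"
    by (simp_all only: cscale_minus_one diff_conv_add_uminus)
  show ?thesis by (simp only: e0 e1)
qed
lemma vhom_comp: "vhom A YA B YB f \<Longrightarrow> vhom B YB C YC g \<Longrightarrow> vhom A YA C YC (g \<circ> f)"
  unfolding vhom_def comp_def by simp

lemma wm_csub: "weak_module Vop vac M Y \<Longrightarrow> csubspace M" by (simp add: weak_module_def)
lemma wm_closed: "weak_module Vop vac M Y \<Longrightarrow> w \<in> M \<Longrightarrow> Y u n w \<in> M" by (simp add: weak_module_def)
lemma wm_add: "weak_module Vop vac M Y \<Longrightarrow> w \<in> M \<Longrightarrow> w' \<in> M \<Longrightarrow> Y u n (w + w') = Y u n w + Y u n w'"
proof -
  assume a: "weak_module Vop vac M Y" "w \<in> M" "w' \<in> M"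
  have "Y u n (1 *c w + 1 *c w') = 1 *c Y u n w + 1 *c Y u n w'" using a unfolding weak_module_def by blast
  thus ?thesis by (simp add: cscale_one)
qed
lemma wm_scale: "weak_module Vop vac M Y \<Longrightarrow> w \<in> M \<Longrightarrow> Y u n (c *c w) = c *c Y u n w"
proof -
  assume a: "weak_module Vop vac M Y" "w \<in> M"
  have "Y u n (c *c w + 0 *c w) = c *c Y u n w + 0 *c Y u n w" using a unfolding weak_module_def by blast
  thus ?thesis by simp
qed
lemma wm_zero: "weak_module Vop vac M Y \<Longrightarrow> Y u n 0 = 0"
  using wm_scale[of Vop vac M Y 0 u n 0] wm_csub csub_zero by fastforce

lemma ball_restr: "(\<forall>u v. \<forall>w\<in>M. P u v w) \<Longrightarrow> N \<subseteq> M \<Longrightarrow> (\<forall>u v. \<forall>w\<in>N. P u v w)" by blast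

lemma sub_wm: "weak_module Vop vac M Y \<Longrightarrow> submodule N M Y \<Longrightarrow> weak_module Vop vac N Y"
proof -
  assume a: "weak_module Vop vac M Y" "submodule N M Y"
  hence NM: "N \<subseteq> M" by (simp add: submodule_def)
  have j: "jacobi Vop M Y" using a(1) by (simp add: weak_module_def)
  have "jacobi Vop N Y" using ball_restr[OF j[unfolded jacobi_def] NM] unfolding jacobi_def .
  moreover have "csubspace N" "\<forall>u n. \<forall>w\<in>N. Y u n w \<in> N" using a(2) by (auto simp: submodule_def)
  moreover have l1: "\<forall>u n a b. \<forall>w\<in>M. \<forall>w'\<in>M. Y u n (a *c w + b *c w') = a *c Y u n w + b *c Y u n w'"
    and l2: "\<forall>u u' n a b. \<forall>w\<in>M. Y (a *c u + b *c u') n w = a *c Y u n w + b *c Y u' n w"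
    and l3: "\<forall>u. \<forall>w\<in>M. \<exists>K. \<forall>n\<ge>K. Y u n w = 0"
    and l4: "\<forall>n. \<forall>w\<in>M. Y vac n w = (if n = -1 then w else 0)"
    using a(1) unfolding weak_module_def by blast+
  moreover have "\<forall>u n a b. \<forall>w\<in>N. \<forall>w'\<in>N. Y u n (a *c w + b *c w') = a *c Y u n w + b *c Y u n w'"
    using l1 NM by (simp add: subset_iff)
  moreover have "\<forall>u u' n a b. \<forall>w\<in>N. Y (a *c u + b *c u') n w = a *c Y u n w + b *c Y u' n w"
    using l2 NM by (simp add: subset_iff)
  moreover have "\<forall>u. \<forall>w\<in>N. \<exists>K. \<forall>n\<ge>K. Y u n w = 0"
    using l3 NM by (simp add: subset_iff)
  moreover have "\<forall>n. \<forall>w\<in>N. Y vac n w = (if n = -1 then w else 0)"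
    using l4 NM by (simp add: subset_iff)
  ultimately show ?thesis unfolding weak_module_def by blast
qed

lemma image_sub: "vhom A YA X YX h \<Longrightarrow> weak_module Vop vac A YA \<Longrightarrow> submodule (h ` A) X YX"
proof -
  assume h: "vhom A YA X YX h" and A: "weak_module Vop vac A YA"
  have cs: "csubspace A" using A wm_csub by blast
  show ?thesis unfolding submodule_def csubspace_def
  proof (intro conjI allI ballI)
    show "h ` A \<subseteq> X" using h vhom_in by blast
    show "0 \<in> h ` A" using vhom_zero[OF h cs] csub_zero[OF cs] by force
  next
    fix x y assume "x \<in> h ` A" "y \<in> h ` A"
    then obtain a b where "a \<in> A" "b \<in> A" "x = h a" "y = h b" by blast
    moreover have "a + b \<in> A" using csub_add[OF cs] \<open>a \<in> A\<close> \<open>b \<in> A\<close> by blast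
    ultimately show "x + y \<in> h ` A" using vhom_add[OF h] by (simp add: rev_image_eqI)
  next
    fix c x assume "x \<in> h ` A"
    then obtain a where "a \<in> A" "x = h a" by blast
    moreover have "c *c a \<in> A" using csub_scale[OF cs] \<open>a \<in> A\<close> by blast
    ultimately show "c *c x \<in> h ` A" using vhom_scale[OF h] by (simp add: rev_image_eqI)
  next
    fix u n x assume "x \<in> h ` A"
    then obtain a where "a \<in> A" "x = h a" by blast
    moreover have "YA u n a \<in> A" using wm_closed[OF A] \<open>a \<in> A\<close> by blast
    ultimately show "YX u n x \<in> h ` A" using vhom_Y[OF h] by (metis rev_image_eqI)
  qed
qed




lemma gc1: assumes "good_class Vop vac om C" shows "\<forall>(A, YA)\<in>C. gr_gen_module Vop vac om A YA \<and> fin_gen A YA"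
  using assms unfolding good_class_def by (elim conjE)

lemma gc2: assumes "good_class Vop vac om C" shows "\<exists>(A, YA)\<in>C. A = {0}"
  using assms unfolding good_class_def by (elim conjE)

lemma gc3: assumes "good_class Vop vac om C" shows "\<forall>(A, YA)\<in>C. \<forall>N. submodule N A YA \<longrightarrow>
        (\<exists>(B, YB)\<in>C. \<exists>f. vhom A YA B YB f \<and> f ` A = B \<and> {x\<in>A. f x = 0} = N)"
  using assms unfolding good_class_def by (elim conjE)

lemma gc4: assumes "good_class Vop vac om C" shows "\<forall>(A, YA)\<in>C. \<forall>(B, YB)\<in>C. \<exists>(D, YD)\<in>C. \<exists>i1 i2.
        vhom A YA D YD i1 \<and> vhom B YB D YD i2
        \<and> (\<forall>d\<in>D. \<exists>!p. p \<in> A \<times> B \<and> d = i1 (fst p) + i2 (snd p))"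
  using assms unfolding good_class_def by (elim conjE)

lemma gc_wm: "good_class Vop vac om C \<Longrightarrow> (A,YA) \<in> C \<Longrightarrow> weak_module Vop vac A YA"
proof -
  assume a: "good_class Vop vac om C" "(A,YA) \<in> C"
  have "gr_gen_module Vop vac om A YA \<and> fin_gen A YA" using bspec[OF gc1[OF a(1)] a(2)] by simp
  thus ?thesis unfolding gr_gen_module_def by simp
qed

lemma gc_quot: "good_class Vop vac om C \<Longrightarrow> (A,YA) \<in> C \<Longrightarrow> submodule N A YA \<Longrightarrow>
   \<exists>B YB f. (B,YB) \<in> C \<and> vhom A YA B YB f \<and> f ` A = B \<and> {x\<in>A. f x = 0} = N"
proof -
  assume a: "good_class Vop vac om C" "(A,YA) \<in> C" "submodule N A YA"
  have "\<forall>N. submodule N A YA \<longrightarrow>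
        (\<exists>(B, YB)\<in>C. \<exists>f. vhom A YA B YB f \<and> f ` A = B \<and> {x\<in>A. f x = 0} = N)"
    using bspec[OF gc3[OF a(1)] a(2)] by simp
  hence "\<exists>(B, YB)\<in>C. \<exists>f. vhom A YA B YB f \<and> f ` A = B \<and> {x\<in>A. f x = 0} = N"
    using a(3) by simp
  then obtain p where "p \<in> C" "\<exists>f. vhom A YA (fst p) (snd p) f \<and> f ` A = fst p \<and> {x\<in>A. f x = 0} = N"
    by (auto simp: case_prod_beta)
  thus ?thesis by (metis prod.collapse)
qed

lemma gc_sum: "good_class Vop vac om C \<Longrightarrow> (A,YA) \<in> C \<Longrightarrow> (B,YB) \<in> C \<Longrightarrow>
   \<exists>D YD i1 i2. (D,YD) \<in> C \<and> vhom A YA D YD i1 \<and> vhom B YB D YD i2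
        \<and> (\<forall>d\<in>D. \<exists>!p. p \<in> A \<times> B \<and> d = i1 (fst p) + i2 (snd p))"
proof -
  assume a: "good_class Vop vac om C" "(A,YA) \<in> C" "(B,YB) \<in> C"
  have h1: "\<forall>(B, YB)\<in>C. \<exists>(D, YD)\<in>C. \<exists>i1 i2.
        vhom A YA D YD i1 \<and> vhom B YB D YD i2
        \<and> (\<forall>d\<in>D. \<exists>!p. p \<in> A \<times> B \<and> d = i1 (fst p) + i2 (snd p))"
    using bspec[OF gc4[OF a(1)] a(2)] by simp
  hence "\<exists>(D, YD)\<in>C. \<exists>i1 i2.
        vhom A YA D YD i1 \<and> vhom B YB D YD i2
        \<and> (\<forall>d\<in>D. \<exists>!p. p \<in> A \<times> B \<and> d = i1 (fst p) + i2 (snd p))"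
    using bspec[OF h1 a(3)] by simp
  then obtain p where "p \<in> C" "\<exists>i1 i2.
        vhom A YA (fst p) (snd p) i1 \<and> vhom B YB (fst p) (snd p) i2
        \<and> (\<forall>d\<in>fst p. \<exists>!p. p \<in> A \<times> B \<and> d = i1 (fst p) + i2 (snd p))"
    by (auto simp: case_prod_beta)
  thus ?thesis by (metis prod.collapse)
qed

lemma gc_zero: "good_class Vop vac om C \<Longrightarrow> \<exists>YA. ({0},YA) \<in> C"
proof -
  assume a: "good_class Vop vac om C"
  from gc2[OF a] obtain p where "p \<in> C" "fst p = {0}" by (auto simp: case_prod_beta)
  thus ?thesis by (metis prod.collapse)
qed

lemma image_inC:
  assumes gc: "good_class Vop vac om C" and AC: "(A,YA) \<in> C"
    and wX: "weak_module Vop vac X YX" and h: "vhom A YA X YX h"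
  shows "inC C (h ` A) YX"
proof -
  have wA: "weak_module Vop vac A YA" using gc_wm[OF gc AC] .
  have cA: "csubspace A" using wm_csub[OF wA] .
  define N where "N = {a\<in>A. h a = 0}"
  have subN: "submodule N A YA" unfolding submodule_def csubspace_def N_def
  proof (intro conjI allI ballI)
    show "{a \<in> A. h a = 0} \<subseteq> A" by blast
    show "0 \<in> {a \<in> A. h a = 0}" using csub_zero[OF cA] vhom_zero[OF h cA] by blast
  next
    fix x y assume "x \<in> {a \<in> A. h a = 0}" "y \<in> {a \<in> A. h a = 0}"
    thus "x + y \<in> {a \<in> A. h a = 0}" using csub_add[OF cA] vhom_add[OF h] by auto
  next
    fix c x assume "x \<in> {a \<in> A. h a = 0}"
    thus "c *c x \<in> {a \<in> A. h a = 0}" using csub_scale[OF cA] vhom_scale[OF h] by auto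
  next
    fix u n x assume "x \<in> {a \<in> A. h a = 0}"
    thus "YA u n x \<in> {a \<in> A. h a = 0}" using wm_closed[OF wA] vhom_Y[OF h] wm_zero[OF wX] by auto
  qed
  obtain B YB f where BC: "(B,YB) \<in> C" and f: "vhom A YA B YB f" and fA: "f ` A = B"
    and ker: "{x\<in>A. f x = 0} = N"
    using gc_quot[OF gc AC subN] by blast
  have key: "h a = h a' \<longleftrightarrow> f a = f a'" if "a \<in> A" "a' \<in> A" for a a'
  proof -
    have d: "a - a' \<in> A" using csub_diff[OF cA that] .
    have "h a = h a' \<longleftrightarrow> h (a - a') = 0" using vhom_diff[OF h cA that] by simp
    also have "\<dots> \<longleftrightarrow> a - a' \<in> N" using d by (simp add: N_def)
    also have "\<dots> \<longleftrightarrow> f (a - a') = 0" using d ker[symmetric] by simp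
    also have "\<dots> \<longleftrightarrow> f a = f a'" using vhom_diff[OF f cA that] by simp
    finally show ?thesis .
  qed
  define k where "k x = f (SOME a. a \<in> A \<and> h a = x)" for x
  have kf: "k (h a) = f a" if "a \<in> A" for a
  proof -
    have "\<exists>a'. a' \<in> A \<and> h a' = h a" using that by blast
    hence s: "(SOME a'. a' \<in> A \<and> h a' = h a) \<in> A \<and> h (SOME a'. a' \<in> A \<and> h a' = h a) = h a"
      by (rule someI_ex)
    hence "f (SOME a'. a' \<in> A \<and> h a' = h a) = f a" using key that by blast
    thus ?thesis unfolding k_def .
  qed
  have "viso (h ` A) YX B YB k" unfolding viso_def vhom_def bij_betw_def inj_on_def
  proof (intro conjI ballI allI impI)
    fix x assume "x \<in> h ` A"
    then obtain a where "a \<in> A" "x = h a" by blast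
    thus "k x \<in> B" using kf fA by blast
  next
    fix x y assume "x \<in> h ` A" "y \<in> h ` A"
    then obtain a b where ab: "a \<in> A" "b \<in> A" "x = h a" "y = h b" by blast
    have m: "a + b \<in> A" using csub_add[OF cA ab(1,2)] .
    have "x + y = h (a + b)" using ab vhom_add[OF h ab(1,2)] by simp
    hence "k (x + y) = f (a + b)" using kf[OF m] by simp
    thus "k (x + y) = k x + k y" using ab kf vhom_add[OF f ab(1,2)] by simp
  next
    fix c x assume "x \<in> h ` A"
    then obtain a where ab: "a \<in> A" "x = h a" by blast
    have m: "c *c a \<in> A" using csub_scale[OF cA ab(1)] .
    have "c *c x = h (c *c a)" using ab vhom_scale[OF h ab(1)] by simp
    hence "k (c *c x) = f (c *c a)" using kf[OF m] by simp
    thus "k (c *c x) = c *c k x" using ab kf vhom_scale[OF f ab(1)] by simp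
  next
    fix u n x assume "x \<in> h ` A"
    then obtain a where ab: "a \<in> A" "x = h a" by blast
    have m: "YA u n a \<in> A" using wm_closed[OF wA ab(1)] .
    have "YX u n x = h (YA u n a)" using ab vhom_Y[OF h ab(1)] by simp
    hence "k (YX u n x) = f (YA u n a)" using kf[OF m] by simp
    thus "k (YX u n x) = YB u n (k x)" using ab kf vhom_Y[OF f ab(1)] by simp
  next
    fix x y assume "x \<in> h ` A" "y \<in> h ` A" "k x = k y"
    then obtain a b where ab: "a \<in> A" "b \<in> A" "x = h a" "y = h b" by blast
    hence "f a = f b" using kf \<open>k x = k y\<close> by simp
    thus "x = y" using key ab by simp
  next
    show "k ` h ` A = B"
    proof
      show "k ` h ` A \<subseteq> B" using kf fA by auto
      show "B \<subseteq> k ` h ` A"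
      proof
        fix b assume "b \<in> B"
        then obtain a where "a \<in> A" "b = f a" using fA by blast
        hence "b = k (h a)" using kf by simp
        thus "b \<in> k ` h ` A" using \<open>a \<in> A\<close> by blast
      qed
    qed
  qed
  thus ?thesis unfolding inC_def using BC by blast
qed


lemma viso_inv:
  assumes wM: "weak_module Vop vac M Y" and e: "viso M Y A YA e"
  shows "vhom A YA M Y (inv_into M e)" "inv_into M e ` A = M"
    "\<And>m. m \<in> M \<Longrightarrow> inv_into M e (e m) = m"
    "\<And>a. a \<in> A \<Longrightarrow> inv_into M e a \<in> M \<and> e (inv_into M e a) = a"
proof -
  have eh: "vhom M Y A YA e" and bij: "bij_betw e M A" using e by (auto simp: viso_def)
  have inj: "inj_on e M" and eM: "e ` M = A" using bij by (auto simp: bij_betw_def)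
  have cM: "csubspace M" using wm_csub[OF wM] .
  define e' where "e' = inv_into M e"
  show i1: "\<And>m. m \<in> M \<Longrightarrow> inv_into M e (e m) = m" using inv_into_f_f[OF inj] by blast
  show i2: "\<And>a. a \<in> A \<Longrightarrow> inv_into M e a \<in> M \<and> e (inv_into M e a) = a"
    using eM inv_into_into[of _ e M] f_inv_into_f[of _ e M] by blast
  show "inv_into M e ` A = M" using bij_betw_inv_into[OF bij] by (simp add: bij_betw_def)
  show "vhom A YA M Y (inv_into M e)" unfolding vhom_def
  proof (intro conjI ballI allI)
    fix x assume "x \<in> A" thus "inv_into M e x \<in> M" using i2 by blast
  next
    fix x y assume xy: "x \<in> A" "y \<in> A"
    let ?x = "inv_into M e x" and ?y = "inv_into M e y"
    have m: "?x \<in> M" "?y \<in> M" "?x + ?y \<in> M" using i2 xy csub_add[OF cM] by blast+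
    have "e (?x + ?y) = x + y" using vhom_add[OF eh m(1,2)] i2 xy by simp
    hence "inv_into M e (x + y) = inv_into M e (e (?x + ?y))" by simp
    also have "\<dots> = ?x + ?y" using i1 m(3) by blast
    finally show "inv_into M e (x + y) = ?x + ?y" .
  next
    fix c x assume x: "x \<in> A"
    let ?x = "inv_into M e x"
    have m: "?x \<in> M" "c *c ?x \<in> M" using i2 x csub_scale[OF cM] by blast+
    have "e (c *c ?x) = c *c x" using vhom_scale[OF eh m(1)] i2 x by simp
    hence "inv_into M e (c *c x) = inv_into M e (e (c *c ?x))" by simp
    also have "\<dots> = c *c ?x" using i1 m(2) by blast
    finally show "inv_into M e (c *c x) = c *c ?x" .
  next
    fix u n x assume x: "x \<in> A"
    let ?x = "inv_into M e x"
    have m: "?x \<in> M" "Y u n ?x \<in> M" using i2 x wm_closed[OF wM] by blast+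
    have "e (Y u n ?x) = YA u n x" using vhom_Y[OF eh m(1)] i2 x by simp
    hence "inv_into M e (YA u n x) = inv_into M e (e (Y u n ?x))" by simp
    also have "\<dots> = Y u n ?x" using i1 m(2) by blast
    finally show "inv_into M e (YA u n x) = Y u n ?x" .
  qed
qed

lemma inC_image:
  assumes gc: "good_class Vop vac om C" and MC: "inC C M Y" and wM: "weak_module Vop vac M Y"
    and wX: "weak_module Vop vac X YX" and h: "vhom M Y X YX h"
  shows "inC C (h ` M) YX"
proof -
  obtain p where "p \<in> C" "\<exists>e. viso M Y (fst p) (snd p) e" using MC unfolding inC_def by (auto simp: case_prod_beta)
  then obtain A YA e where AC: "(A,YA) \<in> C" and e: "viso M Y A YA e" by (metis prod.collapse)
  have "vhom A YA X YX (h \<circ> inv_into M e)" using vhom_comp[OF viso_inv(1)[OF wM e] h] .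
  hence "inC C ((h \<circ> inv_into M e) ` A) YX" using image_inC[OF gc AC wX] by blast
  moreover have "(h \<circ> inv_into M e) ` A = h ` (inv_into M e ` A)" by (rule image_comp[symmetric])
  hence "(h \<circ> inv_into M e) ` A = h ` M" using viso_inv(2)[OF wM e] by simp
  ultimately show ?thesis by simp
qed

lemma colim_wm: "colim_wrt T Vop vac I le M Y f N YN g \<Longrightarrow> weak_module Vop vac N YN"
  unfolding colim_wrt_def by (elim conjE)
lemma colim_coc: "colim_wrt T Vop vac I le M Y f N YN g \<Longrightarrow> cocone I le M Y f N YN g"
  unfolding colim_wrt_def by (elim conjE)
lemma colim_univ:
  assumes "colim_wrt (TYPE('z::cvec)) Vop vac I le M Y f N YN g"
    and "weak_module Vop vac (Z::'z set) YZ" "cocone I le M Y f Z YZ h"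
  shows "\<exists>u. vhom N YN Z YZ u \<and> (\<forall>i\<in>I. \<forall>x\<in>M i. u (g i x) = h i x)
           \<and> (\<forall>u'. vhom N YN Z YZ u' \<and> (\<forall>i\<in>I. \<forall>x\<in>M i. u' (g i x) = h i x)
                   \<longrightarrow> (\<forall>y\<in>N. u' y = u y))"
proof -
  have all: "\<forall>(Z::'z set) YZ h. weak_module Vop vac Z YZ \<and> cocone I le M Y f Z YZ h \<longrightarrow>
        (\<exists>u. vhom N YN Z YZ u \<and> (\<forall>i\<in>I. \<forall>x\<in>M i. u (g i x) = h i x)
           \<and> (\<forall>u'. vhom N YN Z YZ u' \<and> (\<forall>i\<in>I. \<forall>x\<in>M i. u' (g i x) = h i x)
                   \<longrightarrow> (\<forall>y\<in>N. u' y = u y)))"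
    using assms(1) unfolding colim_wrt_def by (elim conjE)
  show ?thesis using mp[OF spec[OF spec[OF spec[OF all, of Z], of YZ], of h] conjI[OF assms(2,3)]] .
qed

lemma cocone_vhom: "cocone I le M Y f N YN g \<Longrightarrow> i \<in> I \<Longrightarrow> vhom (M i) (Y i) N YN (g i)"
  by (simp add: cocone_def)
lemma cocone_comp: "cocone I le M Y f N YN g \<Longrightarrow> i \<in> I \<Longrightarrow> j \<in> I \<Longrightarrow> le i j \<Longrightarrow> x \<in> M i \<Longrightarrow> g j (f i j x) = g i x"
  by (simp add: cocone_def)

lemma dsys_dir: "dsys Vop vac I le M Y f \<Longrightarrow> i \<in> I \<Longrightarrow> j \<in> I \<Longrightarrow> \<exists>k\<in>I. le i k \<and> le j k"
  unfolding dsys_def by blast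
lemma dsys_wm: "dsys Vop vac I le M Y f \<Longrightarrow> i \<in> I \<Longrightarrow> weak_module Vop vac (M i) (Y i)"
  unfolding dsys_def by blast
lemma dsys_vhom: "dsys Vop vac I le M Y f \<Longrightarrow> i \<in> I \<Longrightarrow> j \<in> I \<Longrightarrow> le i j \<Longrightarrow> vhom (M i) (Y i) (M j) (Y j) (f i j)"
  unfolding dsys_def by blast

lemma colim_union:
  fixes N :: "'n::cvec set"
  assumes d: "dsys Vop vac I le M Y f"
    and c: "colim_wrt (TYPE('n)) Vop vac I le M Y f N YN g"
  shows "N \<subseteq> {0} \<union> (\<Union>i\<in>I. g i ` M i)"
proof -
  have wN: "weak_module Vop vac N YN" and coc: "cocone I le M Y f N YN g"
    using colim_wm[OF c] colim_coc[OF c] by blast+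
  have cN: "csubspace N" using wm_csub[OF wN] .
  define U where "U = {0} \<union> (\<Union>i\<in>I. g i ` M i)"
  have gin: "g i x \<in> U" if "i \<in> I" "x \<in> M i" for i x using that unfolding U_def by blast
  have UN: "U \<subseteq> N" unfolding U_def using csub_zero[OF cN] vhom_in[OF cocone_vhom[OF coc]] by blast
  have Ucases: "x = 0 \<or> (\<exists>i\<in>I. \<exists>a\<in>M i. x = g i a)" if "x \<in> U" for x using that unfolding U_def by blast
  have subU: "submodule U N YN" unfolding submodule_def csubspace_def
  proof (intro conjI allI ballI UN)
    show "0 \<in> U" unfolding U_def by blast
  next
    fix x y assume x: "x \<in> U" and y: "y \<in> U"
    show "x + y \<in> U"
    proof (cases "x = 0 \<or> y = 0")
      case True thus ?thesis using x y by auto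
    next
      case False
      then obtain i a j b where ia: "i \<in> I" "a \<in> M i" "x = g i a" and jb: "j \<in> I" "b \<in> M j" "y = g j b"
        using Ucases x y by blast
      obtain k where k: "k \<in> I" "le i k" "le j k" using dsys_dir[OF d ia(1) jb(1)] by blast
      have fa: "f i k a \<in> M k" using vhom_in[OF dsys_vhom[OF d ia(1) k(1,2)] ia(2)] .
      have fb: "f j k b \<in> M k" using vhom_in[OF dsys_vhom[OF d jb(1) k(1,3)] jb(2)] .
      have "x + y = g k (f i k a) + g k (f j k b)"
        using cocone_comp[OF coc ia(1) k(1,2) ia(2)] cocone_comp[OF coc jb(1) k(1,3) jb(2)] ia(3) jb(3) by simp
      also have "\<dots> = g k (f i k a + f j k b)" using vhom_add[OF cocone_vhom[OF coc k(1)] fa fb] by simp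
      finally show ?thesis using gin[OF k(1)] csub_add[OF wm_csub[OF dsys_wm[OF d k(1)]] fa fb] by simp
    qed
  next
    fix c x assume x: "x \<in> U"
    show "c *c x \<in> U"
    proof (cases "x = 0")
      case True thus ?thesis using x by simp
    next
      case False
      then obtain i a where ia: "i \<in> I" "a \<in> M i" "x = g i a" using Ucases x by blast
      have "c *c x = g i (c *c a)" using vhom_scale[OF cocone_vhom[OF coc ia(1)] ia(2)] ia(3) by simp
      thus ?thesis using gin[OF ia(1)] csub_scale[OF wm_csub[OF dsys_wm[OF d ia(1)]] ia(2)] by simp
    qed
  next
    fix u n x assume x: "x \<in> U"
    show "YN u n x \<in> U"
    proof (cases "x = 0")
      case True thus ?thesis using x wm_zero[OF wN] by simp
    next
      case False
      then obtain i a where ia: "i \<in> I" "a \<in> M i" "x = g i a" using Ucases x by blast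
      have "YN u n x = g i (Y i u n a)" using vhom_Y[OF cocone_vhom[OF coc ia(1)] ia(2)] ia(3) by simp
      thus ?thesis using gin[OF ia(1)] wm_closed[OF dsys_wm[OF d ia(1)] ia(2)] by simp
    qed
  qed
  have wU: "weak_module Vop vac U YN" using sub_wm[OF wN subU] .
  have cocU: "cocone I le M Y f U YN g" unfolding cocone_def
  proof (intro conjI ballI impI)
    fix i assume i: "i \<in> I"
    show "vhom (M i) (Y i) U YN (g i)" using cocone_vhom[OF coc i] gin[OF i] unfolding vhom_def by blast
  next
    fix i j x assume "i \<in> I" "j \<in> I" "le i j" "x \<in> M i"
    thus "g j (f i j x) = g i x" using cocone_comp[OF coc] by blast
  qed
  obtain u where u: "vhom N YN U YN u" and ug: "\<forall>i\<in>I. \<forall>x\<in>M i. u (g i x) = g i x"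
    using colim_univ[OF c wU cocU] by blast
  have uN: "vhom N YN N YN u" using u UN unfolding vhom_def by blast
  have idN: "vhom N YN N YN id" unfolding vhom_def using cN by (simp add: csubspace_def wm_closed[OF wN])
  obtain u0 where u0: "\<forall>u'. vhom N YN N YN u' \<and> (\<forall>i\<in>I. \<forall>x\<in>M i. u' (g i x) = g i x)
                   \<longrightarrow> (\<forall>y\<in>N. u' y = u0 y)"
    using colim_univ[OF c wN coc] by blast
  have "\<forall>y\<in>N. u y = u0 y" using u0 uN ug by blast
  moreover have "\<forall>y\<in>N. id y = u0 y" using spec[OF u0, of id] idN by simp
  ultimately have "\<forall>y\<in>N. y = u y" by simp
  moreover have "\<forall>y\<in>N. u y \<in> U" using vhom_in[OF u] by blast
  ultimately show ?thesis unfolding U_def by auto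
qed


lemma inC_obtain: "inC C M Y \<Longrightarrow> \<exists>A YA e. (A,YA) \<in> C \<and> viso M Y A YA e"
proof -
  assume "inC C M Y"
  then obtain p where "p \<in> C" "\<exists>e. viso M Y (fst p) (snd p) e" unfolding inC_def by (auto simp: case_prod_beta)
  thus ?thesis by (metis prod.collapse)
qed

lemma IX_directed:
  assumes gc: "good_class Vop vac om C" and wX: "weak_module Vop vac X YX"
    and s1: "submodule W1 X YX" and c1: "inC C W1 YX"
    and s2: "submodule W2 X YX" and c2: "inC C W2 YX"
  shows "\<exists>W. submodule W X YX \<and> inC C W YX \<and> W1 \<subseteq> W \<and> W2 \<subseteq> W"
proof -
  have w1: "weak_module Vop vac W1 YX" using sub_wm[OF wX s1] .
  have w2: "weak_module Vop vac W2 YX" using sub_wm[OF wX s2] .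
  have W1X: "W1 \<subseteq> X" and W2X: "W2 \<subseteq> X" using s1 s2 by (auto simp: submodule_def)
  have cX: "csubspace X" using wm_csub[OF wX] .
  obtain A YA e1 where AC: "(A,YA) \<in> C" and e1: "viso W1 YX A YA e1" using inC_obtain[OF c1] by blast
  obtain B YB e2 where BC: "(B,YB) \<in> C" and e2: "viso W2 YX B YB e2" using inC_obtain[OF c2] by blast
  define e1' where "e1' = inv_into W1 e1"
  define e2' where "e2' = inv_into W2 e2"
  have v1: "vhom A YA W1 YX e1'" using viso_inv(1)[OF w1 e1] unfolding e1'_def .
  have v2: "vhom B YB W2 YX e2'" using viso_inv(1)[OF w2 e2] unfolding e2'_def .
  have l1: "\<And>m. m \<in> W1 \<Longrightarrow> e1' (e1 m) = m" using viso_inv(3)[OF w1 e1] unfolding e1'_def .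
  have l2: "\<And>m. m \<in> W2 \<Longrightarrow> e2' (e2 m) = m" using viso_inv(3)[OF w2 e2] unfolding e2'_def .
  have e1in: "\<And>m. m \<in> W1 \<Longrightarrow> e1 m \<in> A" using e1 unfolding viso_def vhom_def by blast
  have e2in: "\<And>m. m \<in> W2 \<Longrightarrow> e2 m \<in> B" using e2 unfolding viso_def vhom_def by blast
  obtain D YD i1 i2 where DC: "(D,YD) \<in> C" and i1: "vhom A YA D YD i1" and i2: "vhom B YB D YD i2"
    and uniq: "\<forall>d\<in>D. \<exists>!p. p \<in> A \<times> B \<and> d = i1 (fst p) + i2 (snd p)"
    using gc_sum[OF gc AC BC] by blast
  have wA: "weak_module Vop vac A YA" using gc_wm[OF gc AC] .
  have wB: "weak_module Vop vac B YB" using gc_wm[OF gc BC] .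
  have wD: "weak_module Vop vac D YD" using gc_wm[OF gc DC] .
  have cA: "csubspace A" using wm_csub[OF wA] .
  have cB: "csubspace B" using wm_csub[OF wB] .
  have cD: "csubspace D" using wm_csub[OF wD] .
  define h where "h d = (case (THE p. p \<in> A \<times> B \<and> d = i1 (fst p) + i2 (snd p)) of (a, b) \<Rightarrow> e1' a + e2' b)" for d
  have dD: "i1 a + i2 b \<in> D" if "a \<in> A" "b \<in> B" for a b
    using csub_add[OF cD vhom_in[OF i1 that(1)] vhom_in[OF i2 that(2)]] .
  have hD: "h (i1 a + i2 b) = e1' a + e2' b" if ab: "a \<in> A" "b \<in> B" for a b
  proof -
    have "(THE p. p \<in> A \<times> B \<and> i1 a + i2 b = i1 (fst p) + i2 (snd p)) = (a, b)"
      by (rule the1_equality[OF bspec[OF uniq dD[OF ab]]]) (simp add: ab)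
    thus ?thesis unfolding h_def by simp
  qed
  have dec: "\<exists>a\<in>A. \<exists>b\<in>B. d = i1 a + i2 b" if dd: "d \<in> D" for d
  proof -
    obtain p where "p \<in> A \<times> B" "d = i1 (fst p) + i2 (snd p)" using bspec[OF uniq dd] by blast
    thus ?thesis by (cases p) auto
  qed
  have e1X: "e1' a \<in> X" if "a \<in> A" for a using vhom_in[OF v1 that] W1X by blast
  have e2X: "e2' b \<in> X" if "b \<in> B" for b using vhom_in[OF v2 that] W2X by blast
  have hv: "vhom D YD X YX h" unfolding vhom_def
  proof (intro conjI ballI allI)
    fix d assume "d \<in> D"
    then obtain a b where ab: "a \<in> A" "b \<in> B" "d = i1 a + i2 b" using dec by blast
    show "h d \<in> X" using ab hD csub_add[OF cX e1X[OF ab(1)] e2X[OF ab(2)]] by simp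
  next
    fix d d' assume "d \<in> D" "d' \<in> D"
    then obtain a b a' b' where ab: "a \<in> A" "b \<in> B" "d = i1 a + i2 b"
      and ab': "a' \<in> A" "b' \<in> B" "d' = i1 a' + i2 b'" using dec by meson
    have s: "a + a' \<in> A" "b + b' \<in> B" using csub_add[OF cA ab(1) ab'(1)] csub_add[OF cB ab(2) ab'(2)] by blast+
    have "d + d' = i1 (a + a') + i2 (b + b')"
      using ab ab' vhom_add[OF i1 ab(1) ab'(1)] vhom_add[OF i2 ab(2) ab'(2)] by (simp add: add_ac)
    hence "h (d + d') = e1' (a + a') + e2' (b + b')" using hD[OF s] by simp
    also have "\<dots> = (e1' a + e2' b) + (e1' a' + e2' b')"
      using vhom_add[OF v1 ab(1) ab'(1)] vhom_add[OF v2 ab(2) ab'(2)] by (simp add: add_ac)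
    finally show "h (d + d') = h d + h d'" using hD ab ab' by simp
  next
    fix c d assume "d \<in> D"
    then obtain a b where ab: "a \<in> A" "b \<in> B" "d = i1 a + i2 b" using dec by blast
    have s: "c *c a \<in> A" "c *c b \<in> B" using csub_scale[OF cA ab(1)] csub_scale[OF cB ab(2)] by blast+
    have "c *c d = i1 (c *c a) + i2 (c *c b)"
      using ab vhom_scale[OF i1 ab(1)] vhom_scale[OF i2 ab(2)] by (simp add: cscale_add_right)
    hence "h (c *c d) = e1' (c *c a) + e2' (c *c b)" using hD[OF s] by simp
    also have "\<dots> = c *c (e1' a + e2' b)"
      using vhom_scale[OF v1 ab(1)] vhom_scale[OF v2 ab(2)] by (simp add: cscale_add_right)
    finally show "h (c *c d) = c *c h d" using hD ab by simp
  next
    fix u n d assume "d \<in> D"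
    then obtain a b where ab: "a \<in> A" "b \<in> B" "d = i1 a + i2 b" using dec by blast
    have s: "YA u n a \<in> A" "YB u n b \<in> B" using wm_closed[OF wA ab(1)] wm_closed[OF wB ab(2)] by blast+
    have "YD u n d = YD u n (i1 a) + YD u n (i2 b)"
      using ab wm_add[OF wD vhom_in[OF i1 ab(1)] vhom_in[OF i2 ab(2)]] by simp
    also have "\<dots> = i1 (YA u n a) + i2 (YB u n b)" using vhom_Y[OF i1 ab(1)] vhom_Y[OF i2 ab(2)] by simp
    finally have "h (YD u n d) = e1' (YA u n a) + e2' (YB u n b)" using hD[OF s] by simp
    also have "\<dots> = YX u n (e1' a) + YX u n (e2' b)" using vhom_Y[OF v1 ab(1)] vhom_Y[OF v2 ab(2)] by simp
    also have "\<dots> = YX u n (e1' a + e2' b)" using wm_add[OF wX e1X[OF ab(1)] e2X[OF ab(2)]] by simp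
    finally show "h (YD u n d) = YX u n (h d)" using hD ab by simp
  qed
  have sub: "submodule (h ` D) X YX" using image_sub[OF hv wD] .
  have inc: "inC C (h ` D) YX" using image_inC[OF gc DC wX hv] .
  have z1: "e1' 0 = 0" using vhom_zero[OF v1 cA] .
  have z2: "e2' 0 = 0" using vhom_zero[OF v2 cB] .
  have "W1 \<subseteq> h ` D"
  proof
    fix w assume w: "w \<in> W1"
    have "h (i1 (e1 w) + i2 0) = w" using hD[OF e1in[OF w] csub_zero[OF cB]] l1[OF w] z2 by simp
    thus "w \<in> h ` D" using dD[OF e1in[OF w] csub_zero[OF cB]] by (metis image_eqI)
  qed
  moreover have "W2 \<subseteq> h ` D"
  proof
    fix w assume w: "w \<in> W2"
    have "h (i1 0 + i2 (e2 w)) = w" using hD[OF csub_zero[OF cA] e2in[OF w]] l2[OF w] z1 by simp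
    thus "w \<in> h ` D" using dD[OF csub_zero[OF cA] e2in[OF w]] by (metis image_eqI)
  qed
  ultimately show ?thesis using sub inc by blast
qed


theorem proposition4:
  fixes Vop :: "'v::cvec \<Rightarrow> int \<Rightarrow> 'v \<Rightarrow> 'v" and vac om :: 'v
    and C :: "('c::cvec set \<times> ('v \<Rightarrow> int \<Rightarrow> 'c \<Rightarrow> 'c)) set"
    and X :: "'x::cvec set" and YX :: "'v \<Rightarrow> int \<Rightarrow> 'x \<Rightarrow> 'x"
    and IX :: "'x set set"
    and L :: "'l::cvec set" and YL :: "'v \<Rightarrow> int \<Rightarrow> 'l \<Rightarrow> 'l"
    and phi :: "'x set \<Rightarrow> 'x \<Rightarrow> 'l" and Q :: "'l \<Rightarrow> 'x"
  assumes "voa Vop vac om"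
    and "good_class Vop vac om C"
    and "weak_module Vop vac X YX"
    and IX_def: "IX = {W. submodule W X YX \<and> inC C W YX}"
    and "colim_wrt TYPE('l) Vop vac IX (\<subseteq>) (\<lambda>W. W) (\<lambda>W. YX) (\<lambda>W W'. id) L YL phi"
    and "colim_wrt TYPE('x) Vop vac IX (\<subseteq>) (\<lambda>W. W) (\<lambda>W. YX) (\<lambda>W W'. id) L YL phi"
    and "vhom L YL X YX Q"
    and "\<forall>W\<in>IX. \<forall>x\<in>W. Q (phi W x) = x"
  shows "inj_on Q L
       \<and> (Q ` L = X \<longrightarrow> in_Ind TYPE('z::cvec) TYPE('x set) TYPE('x) Vop vac C X YX)
       \<and> (in_Ind TYPE('x) TYPE('i) TYPE('m::cvec) Vop vac C X YX \<longrightarrow> Q ` L = X)"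
proof -
  note gc = assms(2) and wX = assms(3) and cl = assms(5) and Qh = assms(7) and Qphi = assms(8)
  have cX: "csubspace X" using wm_csub[OF wX] .
  have IXI: "W \<in> IX \<longleftrightarrow> submodule W X YX \<and> inC C W YX" for W using IX_def by simp
  have dirIX: "\<exists>W\<in>IX. W1 \<subseteq> W \<and> W2 \<subseteq> W" if "W1 \<in> IX" "W2 \<in> IX" for W1 W2
    using IX_directed[OF gc wX, of W1 W2] that IXI by blast
  have wW: "weak_module Vop vac W YX" if "W \<in> IX" for W using sub_wm[OF wX] that IXI by blast
  have WX: "W \<subseteq> X" if "W \<in> IX" for W using that IXI by (auto simp: submodule_def)
  have dsysIX: "dsys Vop vac IX (\<subseteq>) (\<lambda>W. W) (\<lambda>W. YX) (\<lambda>W W'. id)"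
    unfolding dsys_def
  proof (intro conjI ballI impI)
    fix i j k :: "'x set" assume "i \<subseteq> j" "j \<subseteq> k" thus "i \<subseteq> k" by blast
  next
    fix i j assume "i \<in> IX" "j \<in> IX" thus "\<exists>k\<in>IX. i \<subseteq> k \<and> j \<subseteq> k" using dirIX by blast
  next
    fix i assume "i \<in> IX" thus "weak_module Vop vac i YX" using wW by blast
  next
    fix i j :: "'x set" assume "i \<subseteq> j" thus "vhom i YX j YX id" unfolding vhom_def by auto
  qed auto
  have zIX: "{0} \<in> IX"
  proof -
    have "submodule {0} X YX" unfolding submodule_def csubspace_def
      using csub_zero[OF cX] wm_zero[OF wX] by auto
    moreover obtain YA where ZC: "({0}, YA) \<in> C" using gc_zero[OF gc] by blast
    have "viso {0} YX {0} YA (\<lambda>_. 0)" unfolding viso_def vhom_def bij_betw_def inj_on_def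
      using wm_zero[OF wX] wm_zero[OF gc_wm[OF gc ZC]] by auto
    hence "inC C {0} YX" unfolding inC_def using ZC by blast
    ultimately show ?thesis using IXI by blast
  qed
  have wL: "weak_module Vop vac L YL" using colim_wm[OF cl] .
  have cL: "csubspace L" using wm_csub[OF wL] .
  have cocL: "cocone IX (\<subseteq>) (\<lambda>W. W) (\<lambda>W. YX) (\<lambda>W W'. id) L YL phi" using colim_coc[OF cl] .
  have phiv: "vhom W YX L YL (phi W)" if "W \<in> IX" for W using cocone_vhom[OF cocL that] by simp
  have phic: "phi W' x = phi W x" if "W \<in> IX" "W' \<in> IX" "W \<subseteq> W'" "x \<in> W" for W W' x
    using cocone_comp[OF cocL that] by simp
  have Lsub: "L \<subseteq> (\<Union>W\<in>IX. phi W ` W)"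
  proof -
    have "L \<subseteq> {0} \<union> (\<Union>W\<in>IX. phi W ` W)" using colim_union[OF dsysIX cl] by simp
    moreover have "phi {0} 0 = 0" using vhom_zero[OF phiv[OF zIX]] by (simp add: csubspace_def)
    hence "0 \<in> (\<Union>W\<in>IX. phi W ` W)" using zIX by force
    ultimately show ?thesis by blast
  qed
  have part1: "inj_on Q L"
  proof (rule inj_onI)
    fix x y assume x: "x \<in> L" and y: "y \<in> L" and Qxy: "Q x = Q y"
    obtain W a where W: "W \<in> IX" "a \<in> W" "x = phi W a" using x Lsub by blast
    obtain W' b where W': "W' \<in> IX" "b \<in> W'" "y = phi W' b" using y Lsub by blast
    have "a = b" using Qxy W W' Qphi by simp
    obtain W'' where W'': "W'' \<in> IX" "W \<subseteq> W''" "W' \<subseteq> W''" using dirIX[OF W(1) W'(1)] by blast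
    have "x = phi W'' a" using phic[OF W(1) W''(1,2) W(2)] W(3) by simp
    moreover have "y = phi W'' b" using phic[OF W'(1) W''(1,3) W'(2)] W'(3) by simp
    ultimately show "x = y" using \<open>a = b\<close> by simp
  qed
  have part2: "in_Ind TYPE('z::cvec) TYPE('x set) TYPE('x) Vop vac C X YX" if surj: "Q ` L = X"
  proof -
    have XinW: "\<exists>W\<in>IX. x \<in> W" if xX: "x \<in> X" for x
    proof -
      obtain l where "l \<in> L" "x = Q l" using surj xX by blast
      then obtain W a where "W \<in> IX" "a \<in> W" "x = Q (phi W a)" using Lsub by blast
      thus ?thesis using Qphi by auto
    qed
    have icIX: "\<forall>i\<in>IX. inC C i YX" using IXI by blast
    have "colim_wrt TYPE('z) Vop vac IX (\<subseteq>) (\<lambda>W. W) (\<lambda>W. YX) (\<lambda>W W'. id) X YX (\<lambda>W x. x)"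
      unfolding colim_wrt_def
    proof (intro conjI allI impI)
      show "weak_module Vop vac X YX" using wX .
      show "cocone IX (\<subseteq>) (\<lambda>W. W) (\<lambda>W. YX) (\<lambda>W W'. id) X YX (\<lambda>W x. x)"
        unfolding cocone_def vhom_def using WX by auto
    next
      fix Z :: "'z set" and YZ h
      assume "weak_module Vop vac Z YZ \<and> cocone IX (\<subseteq>) (\<lambda>W. W) (\<lambda>W. YX) (\<lambda>W W'. id) Z YZ h"
      hence wZ: "weak_module Vop vac Z YZ" and coch: "cocone IX (\<subseteq>) (\<lambda>W. W) (\<lambda>W. YX) (\<lambda>W W'. id) Z YZ h"
        by blast+
      have hv: "vhom W YX Z YZ (h W)" if "W \<in> IX" for W using cocone_vhom[OF coch that] by simp
      have hc: "h W' x = h W x" if "W \<in> IX" "W' \<in> IX" "W \<subseteq> W'" "x \<in> W" for W W' x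
        using cocone_comp[OF coch that] by simp
      define u where "u x = h (SOME W. W \<in> IX \<and> x \<in> W) x" for x
      have uf: "u x = h W x" if W: "W \<in> IX" "x \<in> W" for W x
      proof -
        have "\<exists>W. W \<in> IX \<and> x \<in> W" using W by blast
        hence W0: "(SOME W. W \<in> IX \<and> x \<in> W) \<in> IX \<and> x \<in> (SOME W. W \<in> IX \<and> x \<in> W)" by (rule someI_ex)
        obtain W'' where W'': "W'' \<in> IX" "W \<subseteq> W''" "(SOME W. W \<in> IX \<and> x \<in> W) \<subseteq> W''"
          using dirIX[OF W(1)] W0 by blast
        have "h W'' x = h W x" using hc[OF W(1) W''(1,2) W(2)] .
        moreover have "h W'' x = u x" unfolding u_def using hc[OF _ W''(1,3)] W0 by blast
        ultimately show ?thesis by simp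
      qed
      have uv: "vhom X YX Z YZ u" unfolding vhom_def
      proof (intro conjI ballI allI)
        fix x assume "x \<in> X"
        then obtain W where W: "W \<in> IX" "x \<in> W" using XinW by blast
        show "u x \<in> Z" using uf[OF W] vhom_in[OF hv[OF W(1)] W(2)] by simp
      next
        fix x y assume "x \<in> X" "y \<in> X"
        then obtain W1 W2 where W: "W1 \<in> IX" "x \<in> W1" "W2 \<in> IX" "y \<in> W2" using XinW by meson
        obtain W where W': "W \<in> IX" "W1 \<subseteq> W" "W2 \<subseteq> W" using dirIX[OF W(1,3)] by blast
        have xy: "x \<in> W" "y \<in> W" using W W' by blast+
        have "x + y \<in> W" using csub_add[OF wm_csub[OF wW[OF W'(1)]] xy] .
        thus "u (x + y) = u x + u y" using uf[OF W'(1)] xy vhom_add[OF hv[OF W'(1)] xy] by simp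
      next
        fix c x assume "x \<in> X"
        then obtain W where W: "W \<in> IX" "x \<in> W" using XinW by blast
        have "c *c x \<in> W" using csub_scale[OF wm_csub[OF wW[OF W(1)]] W(2)] .
        thus "u (c *c x) = c *c u x" using uf[OF W(1)] W(2) vhom_scale[OF hv[OF W(1)] W(2)] by simp
      next
        fix v n x assume "x \<in> X"
        then obtain W where W: "W \<in> IX" "x \<in> W" using XinW by blast
        have "YX v n x \<in> W" using wm_closed[OF wW[OF W(1)] W(2)] .
        thus "u (YX v n x) = YZ v n (u x)" using uf[OF W(1)] W(2) vhom_Y[OF hv[OF W(1)] W(2)] by simp
      qed
      show "\<exists>u. vhom X YX Z YZ u \<and> (\<forall>i\<in>IX. \<forall>x\<in>i. u x = h i x) \<and>
            (\<forall>u'. vhom X YX Z YZ u' \<and> (\<forall>i\<in>IX. \<forall>x\<in>i. u' x = h i x) \<longrightarrow> (\<forall>y\<in>X. u' y = u y))"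
      proof (intro exI conjI allI impI ballI)
        show "vhom X YX Z YZ u" using uv .
      next
        fix i x assume "i \<in> IX" "x \<in> i" thus "u x = h i x" using uf by blast
      next
        fix u' y assume u': "vhom X YX Z YZ u' \<and> (\<forall>i\<in>IX. \<forall>x\<in>i. u' x = h i x)" and y: "y \<in> X"
        then obtain W where W: "W \<in> IX" "y \<in> W" using XinW by blast
        thus "u' y = u y" using u' uf by simp
      qed
    qed
    hence "dsys Vop vac IX (\<subseteq>) (\<lambda>W. W) (\<lambda>W. YX) (\<lambda>W W'. id) \<and> (\<forall>i\<in>IX. inC C i YX)
       \<and> colim_wrt TYPE('z) Vop vac IX (\<subseteq>) (\<lambda>W. W) (\<lambda>W. YX) (\<lambda>W W'. id) X YX (\<lambda>W x. x)"
      using dsysIX icIX by blast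
    thus ?thesis unfolding in_Ind_def by blast
  qed
  have part3: "Q ` L = X" if ind: "in_Ind TYPE('x) TYPE('i) TYPE('m::cvec) Vop vac C X YX"
  proof -
    obtain I :: "'i set" and le and M :: "'i \<Rightarrow> 'm set" and Y f g where
      d: "dsys Vop vac I le M Y f" and ic: "\<forall>i\<in>I. inC C (M i) (Y i)"
      and cg: "colim_wrt TYPE('x) Vop vac I le M Y f X YX g"
      using ind unfolding in_Ind_def by blast
    have Xsub: "X \<subseteq> {0} \<union> (\<Union>i\<in>I. g i ` M i)" using colim_union[OF d cg] .
    have "X \<subseteq> Q ` L"
    proof
      fix x assume x: "x \<in> X"
      show "x \<in> Q ` L"
      proof (cases "x = 0")
        case True
        thus ?thesis using vhom_zero[OF Qh cL] csub_zero[OF cL] by force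
      next
        case False
        then obtain i m where im: "i \<in> I" "m \<in> M i" "x = g i m" using Xsub x by blast
        have gv: "vhom (M i) (Y i) X YX (g i)" using cocone_vhom[OF colim_coc[OF cg] im(1)] .
        have wM: "weak_module Vop vac (M i) (Y i)" using dsys_wm[OF d im(1)] .
        have "g i ` M i \<in> IX" using IXI image_sub[OF gv wM] inC_image[OF gc bspec[OF ic im(1)] wM wX gv] by blast
        moreover have "x \<in> g i ` M i" using im by blast
        ultimately have "Q (phi (g i ` M i) x) = x" "phi (g i ` M i) x \<in> L"
          using Qphi vhom_in[OF phiv] by blast+
        thus ?thesis by (metis image_eqI)
      qed
    qed
    moreover have "Q ` L \<subseteq> X" using vhom_in[OF Qh] by blast
    ultimately show ?thesis by blast
  qed
  show ?thesis using part1 part2 part3 by blast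
qed

end
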